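(* Let $d\ge2$, $y_1,y_2\in\mathbb{S}^{d-1}$ and $0<r_1,r_2<\frac12$. For $i=1,2$ let $B_i$ be the open ball of radius $r_i$ centered at $(1-r_i)y_i$ (internally tangent to $\mathbb{S}^{d-1}$ at $y_i$). If $x\in B_1$ and $x\notin B_2$, then $$\frac{|x-y_1|}{|x-y_2|}\ \le\ \left(\frac{r_1}{r_2}\cdot\frac{1-r_2}{1-r_1}\right)^{1/2}.$$
   Context: $\mathbb{S}^{d-1}$ is the unit sphere of $\mathbb R^d$; $|\cdot|$ is the Euclidean norm. *)

theory Defs
  imports "HOL-Analysis.Analysis"
begin

end

theory Submission
  imports Defs
begin

lemma key:
  fixes x y :: "'a::euclidean_space" and r :: real
  assumes "norm y = 1"
  shows "norm (x - (1 - r) *\<^sub>R y)^2 - r^2 = (1 - r) * norm (x - y)^2 - r * (1 - norm x ^2)"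
proof -
  have a: "norm (x - (1 - r) *\<^sub>R y)^2 = x \<bullet> x - 2 * (1 - r) * (x \<bullet> y) + (1-r)^2 * (y \<bullet> y)"
    unfolding power2_norm_eq_inner by (simp add: inner_diff_left inner_diff_right inner_commute power2_eq_square algebra_simps)
  have b: "norm (x - y)^2 = x \<bullet> x - 2 * (x \<bullet> y) + y \<bullet> y"
    by (simp add: power2_norm_eq_inner inner_diff_left inner_diff_right inner_commute)
  have c: "y \<bullet> y = 1" "norm x ^2 = x \<bullet> x" using assms by (simp_all add: power2_norm_eq_inner[symmetric])
  show ?thesis unfolding a b c by (simp add: algebra_simps power2_eq_square)
qed

theorem lemma2p3:
  fixes x y1 y2 :: "'a::euclidean_space" and r1 r2 :: real
  assumes "DIM('a) \<ge> 2"
    and "y1 \<in> sphere 0 1" and "y2 \<in> sphere 0 1"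
    and "0 < r1" and "r1 < 1/2" and "0 < r2" and "r2 < 1/2"
    and "x \<in> ball ((1 - r1) *\<^sub>R y1) r1"
    and "x \<notin> ball ((1 - r2) *\<^sub>R y2) r2"
  shows "norm (x - y1) / norm (x - y2) \<le> ((r1 / r2) * ((1 - r2) / (1 - r1))) powr (1/2)"
proof -
  define s where "s = 1 - norm x ^ 2"
  define D1 where "D1 = norm (x - y1)^2"
  define D2 where "D2 = norm (x - y2)^2"
  have n1: "norm (x - (1 - r1) *\<^sub>R y1) < r1" using assms(8) by (simp add: dist_norm norm_minus_commute)
  have n2: "norm (x - (1 - r2) *\<^sub>R y2) \<ge> r2" using assms(9) by (simp add: dist_norm norm_minus_commute)
  have "norm (x - (1 - r1) *\<^sub>R y1)^2 < r1^2" using n1 by (simp add: power_strict_mono)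
  hence h1: "(1 - r1) * D1 < r1 * s" using key[of y1 x r1] assms(2) unfolding D1_def s_def by simp
  have "norm (x - (1 - r2) *\<^sub>R y2)^2 \<ge> r2^2" using n2 assms(6) by (simp add: power_mono)
  hence h2: "(1 - r2) * D2 \<ge> r2 * s" using key[of y2 x r2] assms(3) unfolding D2_def s_def by simp
  have D1: "D1 \<ge> 0" unfolding D1_def by simp
  have sp: "s > 0"
  proof (rule ccontr)
    assume "\<not> s > 0"
    hence "r1 * s \<le> 0" using assms(4) by (simp add: mult_nonneg_nonpos)
    moreover have "(1 - r1) * D1 \<ge> 0" using D1 assms(5) by simp
    ultimately show False using h1 by linarith
  qed
  have D2p: "D2 > 0"
  proof (rule ccontr)
    assume "\<not> D2 > 0"
    hence "(1 - r2) * D2 \<le> 0" using assms(7) by (simp add: mult_nonneg_nonpos)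
    moreover have "r2 * s > 0" using sp assms(6) by simp
    ultimately show False using h2 by linarith
  qed
  have q: "D1 / D2 \<le> (r1 / r2) * ((1 - r2) / (1 - r1))"
  proof -
    have "D1 \<le> r1 * s / (1 - r1)" using h1 assms(5) by (simp add: field_simps)
    moreover have "D2 \<ge> r2 * s / (1 - r2)" using h2 assms(7) by (simp add: field_simps)
    ultimately have "D1 / D2 \<le> (r1 * s / (1 - r1)) / (r2 * s / (1 - r2))"
      using D1 D2p assms sp by (intro frac_le) auto
    also have "\<dots> = (r1 / r2) * ((1 - r2) / (1 - r1))" using sp assms by (simp add: field_simps)
    finally show ?thesis .
  qed
  have "norm (x - y1) / norm (x - y2) = sqrt (D1 / D2)"
    unfolding D1_def D2_def by (simp add: real_sqrt_divide)
  also have "\<dots> \<le> sqrt ((r1 / r2) * ((1 - r2) / (1 - r1)))" using q by simp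
  also have "\<dots> = ((r1 / r2) * ((1 - r2) / (1 - r1))) powr (1/2)"
    using assms by (subst powr_half_sqrt) auto
  finally show ?thesis .
qed

end
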